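(* Fix integers $k \ge 3$ and $i \in \{2,\dots,k-1\}$, and let $T = \{1,\dots,k\}\setminus\{i\} \subset \mathbb{Z}$. There is a function $f : \mathbb{Z} \to \{0,\dots,k-2\}$ such that for each $x \in \mathbb{Z}$, $\sum_{y \in T} f(x-y) \equiv 1 \pmod{k-1}$. *)

theory Defs
  imports "HOL-Number_Theory.Cong"
begin

end

theory Submission
  imports Defs
begin

function up :: "int \<Rightarrow> int \<Rightarrow> int \<Rightarrow> int" where
"up k i z = (if z < k - 1 then 0 else (1 - (\<Sum>y\<in>{2..k}-{i}. up k i (z+1-y))) mod (k-1))"
  by auto
termination
  by (relation "measure (\<lambda>(k,i,z). nat z)") auto

function dn :: "int \<Rightarrow> int \<Rightarrow> int \<Rightarrow> int" where
"dn k i z = (if 0 \<le> z then 0 else (1 - (\<Sum>y\<in>{1..k-1}-{i}. dn k i (z+k-y))) mod (k-1))"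
  by auto
termination
  by (relation "measure (\<lambda>(k,i,z). nat (-z))") auto

declare up.simps[simp del] dn.simps[simp del]

theorem proposition8:
  fixes k i :: int
  assumes "k \<ge> 3" and "2 \<le> i" and "i \<le> k - 1"
  shows "\<exists>f :: int \<Rightarrow> int. (\<forall>x. f x \<in> {0..k-2}) \<and>
           (\<forall>x. [(\<Sum>y\<in>{1..k} - {i}. f (x - y)) = 1] (mod (k - 1)))"
proof -
  have mm: "a mod (k-1) \<le> k - 2" for a :: int
    using pos_mod_bound[of "k-1" a] assms by linarith
  define f where "f z = (if z < 0 then dn k i z else up k i z)" for z
  have r1: "f x \<in> {0..k-2}" for x
    using assms unfolding f_def
    by (subst up.simps, subst dn.simps, auto simp: mm)
  have eq: "[(\<Sum>y\<in>{1..k} - {i}. f (x - y)) = 1] (mod (k - 1))" for x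
  proof (cases "x \<ge> k")
    case True
    have S: "{1..k} - {i} = insert 1 ({2..k}-{i})" using assms by auto
    have R: "(\<Sum>y\<in>{2..k}-{i}. f (x - y)) = (\<Sum>y\<in>{2..k}-{i}. up k i (x - 1 + 1 - y))"
      by (rule sum.cong) (use True in \<open>auto simp: f_def\<close>)
    have U: "f (x-1) = (1 - (\<Sum>y\<in>{2..k}-{i}. up k i (x - 1 + 1 - y))) mod (k-1)"
      using True assms unfolding f_def by (subst up.simps) auto
    show ?thesis
      unfolding S using R U by (simp add: cong_def mod_add_left_eq)
  next
    case False
    have S: "{1..k} - {i} = insert k ({1..k-1}-{i})" using assms by auto
    have R: "(\<Sum>y\<in>{1..k-1}-{i}. f (x - y)) = (\<Sum>y\<in>{1..k-1}-{i}. dn k i (x - k + k - y))"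
    proof (rule sum.cong)
      fix y assume y: "y \<in> {1..k-1}-{i}"
      show "f (x - y) = dn k i (x - k + k - y)"
      proof (cases "x - y < 0")
        case True then show ?thesis by (simp add: f_def)
      next
        case c: False
        then have "up k i (x-y) = 0" using False y by (subst up.simps) auto
        moreover have "dn k i (x-y) = 0" using c by (subst dn.simps) auto
        ultimately show ?thesis using c by (simp add: f_def)
      qed
    qed simp
    have U: "f (x-k) = (1 - (\<Sum>y\<in>{1..k-1}-{i}. dn k i (x - k + k - y))) mod (k-1)"
      using False assms unfolding f_def by (subst dn.simps) auto
    show ?thesis
      unfolding S using R U by (simp add: cong_def mod_add_left_eq)
  qed
  show ?thesis using r1 eq by blast
qed

end
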